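(* In the standing setting below, for every set $\mathcal{O}'$ of popular sets with $|\mathcal{O}'|\le\kappa$ there is a single $b$-path-system $\mathcal{P}$ that witnesses the popularity of every $O\in\mathcal{O}'$ simultaneously.
   Context: Standing setting: $M,N$ are finitary matroids on a common ground set $E$; $I\in\mathcal{I}(M)\cap\mathcal{I}(N)$ is maximal among common independent sets; $\kappa:=r(N/I)$ is an uncountable regular cardinal and $r(M/I)<\kappa$. Fix a base $J_M$ of $M/I$ and a base $J_N$ of $N/I$, put $B_M:=I\cup J_M$, $B_N:=I\cup J_N$, $b:=(B_M,B_N)$. For a base $B$ of a matroid $M$, $D_M(B)$ is the digraph on $E$ with arc $ef$ iff $e\notin B$ and $f\in C_M(e,B)\setminus\{e\}$ ($C_M(e,B)$ the fundamental circuit); $D(b):=D_M(B_M)\cup D_N^{-1}(B_N)$ where $D^{-1}$ reverses all arcs. A $b$-path is a finite directed path $P$ in $D(b)$ whose initial vertex lies in $B_N\setminus B_M$ (single vertices allowed); $\mathsf{ter}(P)$ is its terminal vertex and $\mathsf{ter}(\mathcal{P})=\{\mathsf{ter}(P):P\in\mathcal{P}\}$. A $b$-path-system is a set of $\kappa$ pairwise disjoint $b$-paths. A $\Delta$-system is a family of sets any two of which intersect in the same set $K$ (the kernel); its petals are $C\setminus K$. A nonempty $K\subseteq E$ is popular if there exist a $b$-path-system $\mathcal{P}$ and a $\Delta$-system $\mathcal{D}$ of $\kappa$ many circuits of $M$ with kernel $K$ such that every petal of $\mathcal{D}$ is contained in $I\cup\mathsf{ter}(\mathcal{P})$; such $\mathcal{P}$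 witnesses the popularity of $K$. *)

theory Defs
  imports Main
begin

definition finitary_matroid :: "'a set \<Rightarrow> ('a set \<Rightarrow> bool) \<Rightarrow> bool" where
  "finitary_matroid E ind \<longleftrightarrow>
     (\<forall>X. ind X \<longrightarrow> X \<subseteq> E) \<and> ind {} \<and>
     (\<forall>X Y. ind X \<and> Y \<subseteq> X \<longrightarrow> ind Y) \<and>
     (\<forall>X Y. finite X \<and> finite Y \<and> ind X \<and> ind Y \<and> card X < card Y
            \<longrightarrow> (\<exists>y\<in>Y - X. ind (insert y X))) \<and>
     (\<forall>X. X \<subseteq> E \<and> (\<forall>F. F \<subseteq> X \<and> finite F \<longrightarrow> ind F) \<longrightarrow> ind X)"

definition circuit :: "'a set \<Rightarrow> ('a set \<Rightarrow> bool) \<Rightarrow> 'a set \<Rightarrow> bool" where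
  "circuit E ind C \<longleftrightarrow> C \<subseteq> E \<and> \<not> ind C \<and> (\<forall>D. D \<subset> C \<longrightarrow> ind D)"

definition base :: "('a set \<Rightarrow> bool) \<Rightarrow> 'a set \<Rightarrow> bool" where
  "base ind B \<longleftrightarrow> ind B \<and> (\<forall>X. ind X \<and> B \<subseteq> X \<longrightarrow> X = B)"

definition contract_ind :: "('a set \<Rightarrow> bool) \<Rightarrow> 'a set \<Rightarrow> 'a set \<Rightarrow> bool" where
  "contract_ind ind I X \<longleftrightarrow> X \<inter> I = {} \<and> ind (X \<union> I)"

definition fund_circuit :: "'a set \<Rightarrow> ('a set \<Rightarrow> bool) \<Rightarrow> 'a set \<Rightarrow> 'a \<Rightarrow> 'a set" where
  "fund_circuit E ind B e = (THE C. circuit E ind C \<and> C \<subseteq> insert e B)"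

definition D_arc :: "'a set \<Rightarrow> ('a set \<Rightarrow> bool) \<Rightarrow> 'a set \<Rightarrow> 'a \<Rightarrow> 'a \<Rightarrow> bool" where
  "D_arc E ind B e f \<longleftrightarrow> e \<in> E \<and> e \<notin> B \<and> f \<in> fund_circuit E ind B e - {e}"

definition Db_arc :: "'a set \<Rightarrow> ('a set \<Rightarrow> bool) \<Rightarrow> ('a set \<Rightarrow> bool) \<Rightarrow> 'a set \<Rightarrow> 'a set
                     \<Rightarrow> 'a \<Rightarrow> 'a \<Rightarrow> bool" where
  "Db_arc E indM indN BM BN e f \<longleftrightarrow> D_arc E indM BM e f \<or> D_arc E indN BN f e"

definition b_path :: "'a set \<Rightarrow> ('a set \<Rightarrow> bool) \<Rightarrow> ('a set \<Rightarrow> bool) \<Rightarrow> 'a set \<Rightarrow> 'a set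
                     \<Rightarrow> 'a list \<Rightarrow> bool" where
  "b_path E indM indN BM BN p \<longleftrightarrow>
     p \<noteq> [] \<and> distinct p \<and> hd p \<in> BN - BM \<and> successively (Db_arc E indM indN BM BN) p"

definition path_system :: "'a set \<Rightarrow> ('a set \<Rightarrow> bool) \<Rightarrow> ('a set \<Rightarrow> bool) \<Rightarrow> 'a set \<Rightarrow> 'a set
                     \<Rightarrow> 'k rel \<Rightarrow> 'a list set \<Rightarrow> bool" where
  "path_system E indM indN BM BN kappa P \<longleftrightarrow>
     (\<forall>p\<in>P. b_path E indM indN BM BN p) \<and>
     (\<forall>p\<in>P. \<forall>q\<in>P. p \<noteq> q \<longrightarrow> set p \<inter> set q = {}) \<and>
     (card_of P, kappa) \<in> ordIso"

definition witnesses_popular :: "'a set \<Rightarrow> ('a set \<Rightarrow> bool) \<Rightarrow> ('a set \<Rightarrow> bool) \<Rightarrow> 'a set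
                     \<Rightarrow> 'a set \<Rightarrow> 'a set \<Rightarrow> 'k rel \<Rightarrow> 'a list set \<Rightarrow> 'a set \<Rightarrow> bool" where
  "witnesses_popular E indM indN I BM BN kappa P K \<longleftrightarrow>
     path_system E indM indN BM BN kappa P \<and>
     (\<exists>\<D>. (\<forall>C\<in>\<D>. circuit E indM C) \<and> (card_of \<D>, kappa) \<in> ordIso \<and>
          (\<forall>C\<in>\<D>. \<forall>C'\<in>\<D>. C \<noteq> C' \<longrightarrow> C \<inter> C' = K) \<and>
          (\<forall>C\<in>\<D>. C - K \<subseteq> I \<union> last ` P))"

definition popular :: "'a set \<Rightarrow> ('a set \<Rightarrow> bool) \<Rightarrow> ('a set \<Rightarrow> bool) \<Rightarrow> 'a set
                     \<Rightarrow> 'a set \<Rightarrow> 'a set \<Rightarrow> 'k rel \<Rightarrow> 'a set \<Rightarrow> bool" where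
  "popular E indM indN I BM BN kappa K \<longleftrightarrow>
     K \<noteq> {} \<and> (\<exists>P. witnesses_popular E indM indN I BM BN kappa P K)"

end

theory Submission
  imports Defs
begin

lemma small_union:
  fixes r :: "'s rel" and T :: "'t set" and A :: "'t \<Rightarrow> 'v set"
  assumes r: "Card_order r" "infinite (Field r)"
    and T: "(card_of T, r) \<in> ordLess" and fin: "\<forall>t\<in>T. finite (A t)"
  shows "(card_of (\<Union>t\<in>T. A t), r) \<in> ordLess"
proof (cases "finite T")
  case True
  then have "finite (\<Union>t\<in>T. A t)" using fin by blast
  then show ?thesis
    using finite_ordLess_infinite[OF card_of_Well_order card_order_on_well_order_on[OF r(1)]] r(2)
    by (simp add: Field_card_of)
next
  case False
  have "(card_of (\<Union>t\<in>T. A t), card_of T) \<in> ordLeq"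
  proof (rule card_of_UNION_ordLeq_infinite[OF False])
    show "(card_of T, card_of T) \<in> ordLeq" by (simp add: card_of_refl ordIso_imp_ordLeq)
    show "\<forall>t\<in>T. (card_of (A t), card_of T) \<in> ordLeq"
      using fin False
      by (metis Field_card_of card_of_Well_order finite_ordLess_infinite ordLess_imp_ordLeq)
  qed
  then show ?thesis using T ordLeq_ordLess_trans by blast
qed

lemma total_lemma:
  assumes "Card_order r" "s \<in> Field r" "t \<in> Field r" "s \<noteq> t"
  shows "s \<in> underS r t \<or> t \<in> underS r s"
proof -
  have "well_order_on (Field r) r" using card_order_on_well_order_on assms(1) by blast
  then have "total_on (Field r) r" unfolding well_order_on_def linear_order_on_def by blast
  then show ?thesis using assms unfolding total_on_def underS_def by blast
qed

lemma circuit_finite: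
  assumes M: "finitary_matroid E ind" and C: "circuit E ind C"
  shows "finite C"
proof (rule ccontr)
  assume inf: "infinite C"
  have "\<forall>F. F \<subseteq> C \<and> finite F \<longrightarrow> ind F"
    using C inf unfolding circuit_def by (metis psubsetI)
  then have "ind C" using M C unfolding finitary_matroid_def circuit_def by blast
  then show False using C unfolding circuit_def by blast
qed


lemma step_exists:
  fixes r :: "'s rel" and PP :: "'v list set" and DD :: "'v set set" and Kern I0 X U :: "'v set"
    and Ch :: "'v set set"
  assumes r: "Card_order r" "infinite (Field r)"
  and X: "\<And>U. (card_of U, r) \<in> ordLess \<Longrightarrow> X - U \<noteq> {}"
  and PPne: "\<And>p. p \<in> PP \<Longrightarrow> p \<noteq> []"
  and PPdisj: "\<And>p q. p\<in>PP \<Longrightarrow> q\<in>PP \<Longrightarrow> p\<noteq>q \<Longrightarrow> set p \<inter> set q = {}"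
  and DDbig: "(r, card_of DD) \<in> ordLeq"
  and DDfin: "\<And>C. C\<in>DD \<Longrightarrow> finite C"
  and DDint: "\<And>C C'. C\<in>DD \<Longrightarrow> C'\<in>DD \<Longrightarrow> C\<noteq>C' \<Longrightarrow> C \<inter> C' = Kern"
  and DDpet: "\<And>C. C\<in>DD \<Longrightarrow> C - Kern \<subseteq> I0 \<union> last ` PP"
  and U: "(card_of U, r) \<in> ordLess" and Ch: "(card_of Ch, r) \<in> ordLess"
  shows "\<exists>C e Q. C \<in> DD \<and> C \<notin> Ch \<and> Q \<subseteq> PP \<and> finite Q \<and> C - Kern \<subseteq> I0 \<union> last ` Q
          \<and> e \<in> X \<and> e \<notin> U \<and> e \<notin> \<Union>(set ` Q) \<and> \<Union>(set ` Q) \<inter> U = {}"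
proof -
  define B2 where "B2 = {C\<in>DD. \<exists>p\<in>PP. last p \<in> C - Kern \<and> set p \<inter> U \<noteq> {}}"
  define f where "f = (\<lambda>C. SOME u. \<exists>p\<in>PP. last p \<in> C - Kern \<and> u \<in> set p \<inter> U)"
  have fB2: "\<exists>p\<in>PP. last p \<in> C - Kern \<and> f C \<in> set p \<inter> U" if "C \<in> B2" for C
  proof -
    from that obtain p u where "p\<in>PP" "last p \<in> C - Kern" "u \<in> set p \<inter> U" unfolding B2_def by blast
    then have "\<exists>u. \<exists>p\<in>PP. last p \<in> C - Kern \<and> u \<in> set p \<inter> U" by blast
    then show ?thesis unfolding f_def by (rule someI_ex)
  qed
  have "inj_on f B2"
  proof (rule inj_onI)
    fix C C' assume CB: "C \<in> B2" "C' \<in> B2" "f C = f C'"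
    obtain p where p: "p\<in>PP" "last p \<in> C - Kern" "f C \<in> set p \<inter> U" using fB2 CB(1) by blast
    obtain p' where p': "p'\<in>PP" "last p' \<in> C' - Kern" "f C' \<in> set p' \<inter> U" using fB2 CB(2) by blast
    have "p = p'"
    proof (rule ccontr)
      assume "p \<noteq> p'"
      then have "set p \<inter> set p' = {}" using PPdisj p(1) p'(1) by blast
      moreover have "f C \<in> set p" "f C \<in> set p'" using p(3) p'(3) CB(3) by auto
      ultimately show False by blast
    qed
    then have "last p \<in> (C \<inter> C') - Kern" using p p' by blast
    then show "C = C'"
    proof -
      assume l: "last p \<in> (C \<inter> C') - Kern"
      show "C = C'"
      proof (rule ccontr)
        assume "C \<noteq> C'"
        moreover have "C \<in> DD" "C' \<in> DD" using CB(1,2) unfolding B2_def by auto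
        ultimately have "C \<inter> C' = Kern" using DDint by blast
        then show False using l by blast
      qed
    qed
  qed
  moreover have "f ` B2 \<subseteq> U" using fB2 by blast
  ultimately have "(card_of B2, card_of U) \<in> ordLeq" using card_of_ordLeq by blast
  then have B2s: "(card_of B2, r) \<in> ordLess" using U ordLeq_ordLess_trans by blast
  have "(card_of (Ch \<union> B2), r) \<in> ordLess"
    using card_of_Un_ordLess_infinite_Field[OF r(2) r(1) Ch B2s] .
  have "DD - (Ch \<union> B2) \<noteq> {}"
  proof
    assume "DD - (Ch \<union> B2) = {}"
    then have "(card_of DD, card_of (Ch \<union> B2)) \<in> ordLeq" by (intro card_of_mono1) blast
    then have "(card_of DD, r) \<in> ordLess"
      using \<open>(card_of (Ch \<union> B2), r) \<in> ordLess\<close> ordLeq_ordLess_trans by blast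
    then show False using DDbig not_ordLess_ordLeq by blast
  qed
  then obtain C where C: "C \<in> DD" "C \<notin> Ch" "C \<notin> B2" by blast
  define Q where "Q = {p\<in>PP. last p \<in> C - Kern - I0}"
  have injl: "inj_on last PP"
  proof (rule inj_onI)
    fix p q assume pq: "p \<in> PP" "q \<in> PP" "last p = last q"
    show "p = q"
    proof (rule ccontr)
      assume "p \<noteq> q"
      then have "set p \<inter> set q = {}" using PPdisj pq by blast
      moreover have "last p \<in> set p" using PPne pq(1) by simp
      moreover have "last p \<in> set q" using PPne pq(2,3) by (metis last_in_set)
      ultimately show False by blast
    qed
  qed
  have "finite (last ` Q)" using DDfin[OF C(1)] unfolding Q_def by (rule finite_subset[rotated]) blast
  have Qsub: "Q \<subseteq> PP" unfolding Q_def by blast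
  have Qfin: "finite Q" using finite_imageD[OF \<open>finite (last ` Q)\<close> inj_on_subset[OF injl Qsub]] .
  have pet: "C - Kern \<subseteq> I0 \<union> last ` Q"
  proof
    fix x assume x: "x \<in> C - Kern"
    show "x \<in> I0 \<union> last ` Q"
    proof (cases "x \<in> I0")
      case False
      then obtain p where "p \<in> PP" "x = last p" using DDpet[OF C(1)] x by blast
      then show ?thesis using x False unfolding Q_def by blast
    qed simp
  qed
  have QU: "\<Union>(set ` Q) \<inter> U = {}"
  proof -
    have "set p \<inter> U = {}" if "p \<in> Q" for p
    proof -
      have "p \<in> PP" "last p \<in> C - Kern" using that unfolding Q_def by auto
      then show ?thesis using C(1,3) unfolding B2_def by blast
    qed
    then show ?thesis by blast
  qed
  have "(card_of (U \<union> \<Union>(set ` Q)), r) \<in> ordLess"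
  proof (rule card_of_Un_ordLess_infinite_Field[OF r(2) r(1) U])
    have "finite (\<Union>(set ` Q))" using Qfin by blast
    then show "(card_of (\<Union>(set ` Q)), r) \<in> ordLess"
      using finite_ordLess_infinite[OF card_of_Well_order card_order_on_well_order_on[OF r(1)]] r(2)
      by (simp add: Field_card_of)
  qed
  then obtain e where e: "e \<in> X - (U \<union> \<Union>(set ` Q))" using X by blast
  show ?thesis
    apply (rule exI[of _ C], rule exI[of _ e], rule exI[of _ Q])
    using C(1,2) Qsub Qfin pet QU e by simp
qed


lemma construction:
  fixes r :: "'s rel" and task :: "'s \<Rightarrow> 'k" and Ks :: "'k set" and PP :: "'k \<Rightarrow> 'v list set"
    and DD :: "'k \<Rightarrow> 'v set set" and Kern :: "'k \<Rightarrow> 'v set" and I0 X :: "'v set"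
  assumes r: "Card_order r" "infinite (Field r)"
  and X: "\<And>U. (card_of U, r) \<in> ordLess \<Longrightarrow> X - U \<noteq> {}"
  and task: "\<And>s. s \<in> Field r \<Longrightarrow> task s \<in> Ks"
  and PPne: "\<And>k p. k\<in>Ks \<Longrightarrow> p \<in> PP k \<Longrightarrow> p \<noteq> []"
  and PPdisj: "\<And>k p q. k\<in>Ks \<Longrightarrow> p\<in>PP k \<Longrightarrow> q\<in>PP k \<Longrightarrow> p\<noteq>q \<Longrightarrow> set p \<inter> set q = {}"
  and DDbig: "\<And>k. k\<in>Ks \<Longrightarrow> (r, card_of (DD k)) \<in> ordLeq"
  and DDfin: "\<And>k C. k\<in>Ks \<Longrightarrow> C\<in>DD k \<Longrightarrow> finite C"
  and DDint: "\<And>k C C'. k\<in>Ks \<Longrightarrow> C\<in>DD k \<Longrightarrow> C'\<in>DD k \<Longrightarrow> C\<noteq>C' \<Longrightarrow> C \<inter> C' = Kern k"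
  and DDpet: "\<And>k C. k\<in>Ks \<Longrightarrow> C\<in>DD k \<Longrightarrow> C - Kern k \<subseteq> I0 \<union> last ` PP k"
  shows "\<exists>Cf ef Qf. (\<forall>s\<in>Field r. Cf s \<in> DD (task s) \<and> Qf s \<subseteq> PP (task s) \<and> finite (Qf s)
            \<and> Cf s - Kern (task s) \<subseteq> I0 \<union> last ` Qf s \<and> ef s \<in> X \<and> ef s \<notin> \<Union>(set ` Qf s)) \<and>
         (\<forall>s\<in>Field r. \<forall>t\<in>Field r. s \<noteq> t \<longrightarrow> Cf s \<noteq> Cf t \<and>
            insert (ef s) (\<Union>(set ` Qf s)) \<inter> insert (ef t) (\<Union>(set ` Qf t)) = {})"
proof -
  define V where "V = (\<lambda>x::'v set \<times> 'v \<times> 'v list set. insert (fst (snd x)) (\<Union>(set ` snd (snd x))))"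
  define good where "good = (\<lambda>s U Ch (x::'v set \<times> 'v \<times> 'v list set).
      fst x \<in> DD (task s) \<and> fst x \<notin> Ch \<and> snd (snd x) \<subseteq> PP (task s) \<and> finite (snd (snd x))
      \<and> fst x - Kern (task s) \<subseteq> I0 \<union> last ` snd (snd x) \<and> fst (snd x) \<in> X \<and> fst (snd x) \<notin> U
      \<and> fst (snd x) \<notin> \<Union>(set ` snd (snd x)) \<and> \<Union>(set ` snd (snd x)) \<inter> U = {})"
  define H where "H = (\<lambda>(g::'s \<Rightarrow> 'v set \<times> 'v \<times> 'v list set) s.
      SOME x. good s (\<Union>t\<in>underS r s. V (g t)) ((\<lambda>t. fst (g t)) ` underS r s) x)"
  define F where "F = wfrec (r - Id) H"
  have wf: "wf (r - Id)" using wo_rel.WF Card_order_wo_rel r(1) by blast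
  have us: "t \<in> underS r s \<longleftrightarrow> (t, s) \<in> r - Id" for t s unfolding underS_def by blast
  have Feq: "F s = H F s" for s
  proof -
    have "F s = H (cut F (r - Id) s) s" unfolding F_def by (rule wfrec[OF wf])
    also have "\<dots> = H F s"
    proof -
      have e: "cut F (r - Id) s t = F t" if "t \<in> underS r s" for t
        using that us cut_apply by metis
      have "(\<Union>t\<in>underS r s. V (cut F (r - Id) s t)) = (\<Union>t\<in>underS r s. V (F t))"
        using e by simp
      moreover have "(\<lambda>t. fst (cut F (r - Id) s t)) ` underS r s = (\<lambda>t. fst (F t)) ` underS r s"
        using e by simp
      ultimately show ?thesis unfolding H_def by simp
    qed
    finally show ?thesis .
  qed
  have main: "s \<in> Field r \<longrightarrow> good s (\<Union>t\<in>underS r s. V (F t)) ((\<lambda>t. fst (F t)) ` underS r s) (F s)" for s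
  proof (induction s rule: wf_induct[OF wf])
    case (1 s)
    show ?case
    proof
      assume sF: "s \<in> Field r"
      have gt: "good t (\<Union>t'\<in>underS r t. V (F t')) ((\<lambda>t'. fst (F t')) ` underS r t) (F t)"
        if "t \<in> underS r s" for t
      proof -
        have "(t, s) \<in> r - Id" using that us by blast
        moreover have "t \<in> Field r" using that underS_Field by fast
        ultimately show ?thesis using 1 by blast
      qed
      have finV: "finite (V (F t))" if "t \<in> underS r s" for t
        using gt[OF that] unfolding good_def V_def by auto
      have Us: "(card_of (\<Union>t\<in>underS r s. V (F t)), r) \<in> ordLess"
        by (rule small_union[OF r card_of_underS[OF r(1) sF]]) (use finV in blast)
      have Chs: "(card_of ((\<lambda>t. fst (F t)) ` underS r s), r) \<in> ordLess"
        by (rule ordLeq_ordLess_trans[OF card_of_image card_of_underS[OF r(1) sF]])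
      have k: "task s \<in> Ks" using task sF .
      have ex: "\<exists>C e Q. C \<in> DD (task s) \<and> C \<notin> (\<lambda>t. fst (F t)) ` underS r s \<and> Q \<subseteq> PP (task s) \<and> finite Q
          \<and> C - Kern (task s) \<subseteq> I0 \<union> last ` Q
          \<and> e \<in> X \<and> e \<notin> (\<Union>t\<in>underS r s. V (F t)) \<and> e \<notin> \<Union>(set ` Q) \<and> \<Union>(set ` Q) \<inter> (\<Union>t\<in>underS r s. V (F t)) = {}"
        by (rule step_exists[OF r X PPne[OF k] PPdisj[OF k] DDbig[OF k] DDfin[OF k] DDint[OF k] DDpet[OF k] Us Chs])
      obtain C e Q where CeQ: "C \<in> DD (task s) \<and> C \<notin> (\<lambda>t. fst (F t)) ` underS r s \<and> Q \<subseteq> PP (task s) \<and> finite Q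
          \<and> C - Kern (task s) \<subseteq> I0 \<union> last ` Q
          \<and> e \<in> X \<and> e \<notin> (\<Union>t\<in>underS r s. V (F t)) \<and> e \<notin> \<Union>(set ` Q) \<and> \<Union>(set ` Q) \<inter> (\<Union>t\<in>underS r s. V (F t)) = {}"
        using ex by (elim exE)
      have "\<exists>x. good s (\<Union>t\<in>underS r s. V (F t)) ((\<lambda>t. fst (F t)) ` underS r s) x"
        apply (rule exI[of _ "(C, e, Q)"]) using CeQ unfolding good_def by simp
      then have "good s (\<Union>t\<in>underS r s. V (F t)) ((\<lambda>t. fst (F t)) ` underS r s) (H F s)"
        unfolding H_def by (rule someI_ex)
      then show "good s (\<Union>t\<in>underS r s. V (F t)) ((\<lambda>t. fst (F t)) ` underS r s) (F s)"
        using Feq by simp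
    qed
  qed
  define Cf where "Cf = (\<lambda>s. fst (F s))"
  define ef where "ef = (\<lambda>s. fst (snd (F s)))"
  define Qf where "Qf = (\<lambda>s. snd (snd (F s)))"
  have VF: "V (F s) = insert (ef s) (\<Union>(set ` Qf s))" for s unfolding V_def ef_def Qf_def by simp
  have P1: "\<forall>s\<in>Field r. Cf s \<in> DD (task s) \<and> Qf s \<subseteq> PP (task s) \<and> finite (Qf s)
            \<and> Cf s - Kern (task s) \<subseteq> I0 \<union> last ` Qf s \<and> ef s \<in> X \<and> ef s \<notin> \<Union>(set ` Qf s)"
  proof (intro ballI)
    fix s assume sF: "s \<in> Field r"
    have "good s (\<Union>t\<in>underS r s. V (F t)) ((\<lambda>t. fst (F t)) ` underS r s) (F s)"
      by (rule mp[OF main sF])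
    then show "Cf s \<in> DD (task s) \<and> Qf s \<subseteq> PP (task s) \<and> finite (Qf s)
            \<and> Cf s - Kern (task s) \<subseteq> I0 \<union> last ` Qf s \<and> ef s \<in> X \<and> ef s \<notin> \<Union>(set ` Qf s)"
      unfolding good_def Cf_def ef_def Qf_def by simp
  qed
  have P2: "Cf s \<noteq> Cf t \<and> insert (ef s) (\<Union>(set ` Qf s)) \<inter> insert (ef t) (\<Union>(set ` Qf t)) = {}"
    if "s \<in> Field r" "t \<in> underS r s" for s t
  proof -
    have g: "good s (\<Union>t\<in>underS r s. V (F t)) ((\<lambda>t. fst (F t)) ` underS r s) (F s)"
      by (rule mp[OF main that(1)])
    have "Cf s \<noteq> Cf t" using g that(2) unfolding good_def Cf_def by auto
    moreover have "V (F t) \<subseteq> (\<Union>t\<in>underS r s. V (F t))" using that(2) by blast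
    moreover have "V (F s) \<inter> (\<Union>t\<in>underS r s. V (F t)) = {}"
      using g unfolding good_def V_def by auto
    ultimately show ?thesis using VF by blast
  qed
  have "\<forall>s\<in>Field r. \<forall>t\<in>Field r. s \<noteq> t \<longrightarrow> Cf s \<noteq> Cf t \<and>
            insert (ef s) (\<Union>(set ` Qf s)) \<inter> insert (ef t) (\<Union>(set ` Qf t)) = {}"
  proof (intro ballI impI)
    fix s t assume st: "s \<in> Field r" "t \<in> Field r" "s \<noteq> t"
    show "Cf s \<noteq> Cf t \<and> insert (ef s) (\<Union>(set ` Qf s)) \<inter> insert (ef t) (\<Union>(set ` Qf t)) = {}"
    proof (cases "t \<in> underS r s")
      case True
      then show ?thesis using P2 st(1) by blast
    next
      case False
      then have "s \<in> underS r t" using total_lemma[OF r(1) st] by blast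
      then have "Cf t \<noteq> Cf s \<and> insert (ef t) (\<Union>(set ` Qf t)) \<inter> insert (ef s) (\<Union>(set ` Qf s)) = {}"
        using P2 st(2) by blast
      then show ?thesis by (metis Int_commute)
    qed
  qed
  then show ?thesis using P1 by blast
qed


lemma finite_less_inf:
  assumes "finite A" "infinite B"
  shows "(card_of A, card_of B) \<in> ordLess"
  using finite_ordLess_infinite[OF card_of_Well_order card_of_Well_order] assms
  by (simp add: Field_card_of)

lemma big_diff:
  assumes inf: "infinite B" and small: "(card_of A, card_of B) \<in> ordLess"
    and U: "(card_of U, card_of B) \<in> ordLess"
  shows "B - A - U \<noteq> {}"
proof
  assume "B - A - U = {}"
  then have "(card_of B, card_of (A \<union> U)) \<in> ordLeq" by (intro card_of_mono1) blast
  moreover have "(card_of (A \<union> U), card_of B) \<in> ordLess"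
    using card_of_Un_ordLess_infinite[OF inf small U] .
  ultimately have "(card_of B, card_of B) \<in> ordLess" by (rule ordLeq_ordLess_trans)
  then show False using ordLess_irreflexive by blast
qed

lemma singleton_bpath:
  assumes "e \<in> JN - JM" "JN \<inter> I = {}"
  shows "b_path E indM indN (I \<union> JM) (I \<union> JN) [e]"
  using assms unfolding b_path_def by auto

theorem mainTheorem13:
  fixes E :: "'a set" and indM indN :: "'a set \<Rightarrow> bool" and I JM JN :: "'a set"
  assumes M: "finitary_matroid E indM"
    and N: "finitary_matroid E indN"
    and I_common: "indM I \<and> indN I"
    and I_max: "\<forall>X. indM X \<and> indN X \<and> I \<subseteq> X \<longrightarrow> X = I"
    and JM: "base (contract_ind indM I) JM"
    and JN: "base (contract_ind indN I) JN"
    and uncountable: "(card_of JN, card_of (UNIV :: nat set)) \<notin> ordLeq"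
    and regular: "regularCard (card_of JN)"
    and small: "(card_of JM, card_of JN) \<in> ordLess"
  shows "\<forall>Os. (\<forall>K\<in>Os. popular E indM indN I (I \<union> JM) (I \<union> JN) (card_of JN) K) \<and>
              (card_of Os, card_of JN) \<in> ordLeq \<longrightarrow>
            (\<exists>P. path_system E indM indN (I \<union> JM) (I \<union> JN) (card_of JN) P \<and>
                 (\<forall>K\<in>Os. witnesses_popular E indM indN I (I \<union> JM) (I \<union> JN) (card_of JN) P K))"
proof (intro allI impI)
  fix Os :: "'a set set"
  assume H: "(\<forall>K\<in>Os. popular E indM indN I (I \<union> JM) (I \<union> JN) (card_of JN) K) \<and>
              (card_of Os, card_of JN) \<in> ordLeq"
  have JNI: "JN \<inter> I = {}" using JN unfolding base_def contract_ind_def by blast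
  have infJN: "infinite JN"
  proof
    assume "finite JN"
    then have "(card_of JN, card_of (UNIV :: nat set)) \<in> ordLess"
      using finite_less_inf by blast
    then show False using uncountable ordLess_imp_ordLeq by blast
  qed
  have Xp: "(JN - JM) - U \<noteq> {}" if "(card_of U, card_of JN) \<in> ordLess" for U
    using big_diff[OF infJN small that] by blast
  have sb: "b_path E indM indN (I \<union> JM) (I \<union> JN) [e]" if "e \<in> JN - JM" for e
    using singleton_bpath[OF that JNI] .
  have kinf: "infinite (Field (card_of JN))" using infJN by (simp add: Field_card_of)
  show "\<exists>P. path_system E indM indN (I \<union> JM) (I \<union> JN) (card_of JN) P \<and>
                 (\<forall>K\<in>Os. witnesses_popular E indM indN I (I \<union> JM) (I \<union> JN) (card_of JN) P K)"
  proof (cases "Os = {}")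
    case True
    define P where "P = (\<lambda>e. [e]) ` (JN - JM)"
    have c1: "(card_of P, card_of (JN - JM)) \<in> ordLeq" unfolding P_def by (rule card_of_image)
    have c2: "(card_of (JN - JM), card_of P) \<in> ordLeq"
      by (rule card_of_ordLeqI[of "\<lambda>e. [e]"]) (auto simp: P_def inj_on_def)
    have c3: "(card_of (JN - JM), card_of JN) \<in> ordLeq" by (rule card_of_mono1) blast
    have c4: "(card_of JN, card_of (JN - JM)) \<in> ordLeq"
    proof -
      have "(card_of (JN - JM), card_of JN) \<notin> ordLess" using Xp[of "JN - JM"] by blast
      then show ?thesis using not_ordLess_iff_ordLeq[OF card_of_Well_order card_of_Well_order] by blast
    qed
    have "(card_of P, card_of JN) \<in> ordIso"
      unfolding ordIso_iff_ordLeq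
      using ordLeq_transitive[OF c1 c3] ordLeq_transitive[OF c4 c2] by blast
    moreover have "\<forall>p\<in>P. b_path E indM indN (I \<union> JM) (I \<union> JN) p" using sb unfolding P_def by blast
    moreover have "\<forall>p\<in>P. \<forall>q\<in>P. p \<noteq> q \<longrightarrow> set p \<inter> set q = {}" unfolding P_def by auto
    ultimately have "path_system E indM indN (I \<union> JM) (I \<union> JN) (card_of JN) P"
      unfolding path_system_def by blast
    then show ?thesis using True by blast
  next
    case False
    have OT: "(card_of (Os \<times> JN), card_of JN) \<in> ordLeq"
      using ordLeq_ordIso_trans[OF card_of_Times_mono1[OF conjunct2[OF H]] card_of_Times_same_infinite[OF infJN]] .
    have "Os \<times> JN \<noteq> {}" using False infJN by auto
    then obtain h where h: "h ` JN = Os \<times> JN" using card_of_ordLeq2 OT by metis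
    define WP where "WP = (\<lambda>K. SOME P. witnesses_popular E indM indN I (I \<union> JM) (I \<union> JN) (card_of JN) P K)"
    have WPw: "witnesses_popular E indM indN I (I \<union> JM) (I \<union> JN) (card_of JN) (WP K) K" if "K \<in> Os" for K
    proof -
      have "\<exists>P. witnesses_popular E indM indN I (I \<union> JM) (I \<union> JN) (card_of JN) P K"
        using H that unfolding popular_def by blast
      then show ?thesis unfolding WP_def by (rule someI_ex)
    qed
    define DP where "DP = (\<lambda>K D. (\<forall>C\<in>D. circuit E indM C) \<and> (card_of D, card_of JN) \<in> ordIso \<and>
          (\<forall>C\<in>D. \<forall>C'\<in>D. C \<noteq> C' \<longrightarrow> C \<inter> C' = K) \<and>
          (\<forall>C\<in>D. C - K \<subseteq> I \<union> last ` WP K))"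
    define DD where "DD = (\<lambda>K. SOME D. DP K D)"
    have DDw: "DP K (DD K)" if "K \<in> Os" for K
    proof -
      have "\<exists>D. DP K D" using WPw[OF that] unfolding witnesses_popular_def DP_def by blast
      then show ?thesis unfolding DD_def by (rule someI_ex)
    qed
    have PSw: "path_system E indM indN (I \<union> JM) (I \<union> JN) (card_of JN) (WP K)" if "K \<in> Os" for K
      using WPw[OF that] unfolding witnesses_popular_def by blast
    have "\<exists>Cf ef Qf. (\<forall>s\<in>Field (card_of JN). Cf s \<in> DD (fst (h s)) \<and> Qf s \<subseteq> WP (fst (h s)) \<and> finite (Qf s)
            \<and> Cf s - (fst (h s)) \<subseteq> I \<union> last ` Qf s \<and> ef s \<in> JN - JM \<and> ef s \<notin> \<Union>(set ` Qf s)) \<and>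
         (\<forall>s\<in>Field (card_of JN). \<forall>t\<in>Field (card_of JN). s \<noteq> t \<longrightarrow> Cf s \<noteq> Cf t \<and>
            insert (ef s) (\<Union>(set ` Qf s)) \<inter> insert (ef t) (\<Union>(set ` Qf t)) = {})"
    proof (rule construction[where Ks = Os and Kern = "\<lambda>K. K"])
      show "Card_order (card_of JN)" by (rule card_of_Card_order)
      show "infinite (Field (card_of JN))" by (rule kinf)
      show "JN - JM - U \<noteq> {}" if "(card_of U, card_of JN) \<in> ordLess" for U using Xp[OF that] .
      show "fst (h s) \<in> Os" if "s \<in> Field (card_of JN)" for s
      proof -
        have "h s \<in> Os \<times> JN" using h that by (auto simp: Field_card_of)
        then show ?thesis by auto
      qed
      show "p \<noteq> []" if "k \<in> Os" "p \<in> WP k" for k p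
        using PSw[OF that(1)] that(2) unfolding path_system_def b_path_def by blast
      show "set p \<inter> set q = {}" if "k \<in> Os" "p \<in> WP k" "q \<in> WP k" "p \<noteq> q" for k p q
        using PSw[OF that(1)] that(2-4) unfolding path_system_def by blast
      show "(card_of JN, card_of (DD k)) \<in> ordLeq" if "k \<in> Os" for k
      proof -
        have "(card_of (DD k), card_of JN) \<in> ordIso" using DDw[OF that] unfolding DP_def by blast
        then show ?thesis by (rule ordIso_imp_ordLeq[OF ordIso_symmetric])
      qed
      show "finite C" if "k \<in> Os" "C \<in> DD k" for k C
      proof -
        have "circuit E indM C" using DDw[OF that(1)] that(2) unfolding DP_def by blast
        then show ?thesis by (rule circuit_finite[OF M])
      qed
      show "C \<inter> C' = k" if "k \<in> Os" "C \<in> DD k" "C' \<in> DD k" "C \<noteq> C'" for k C C'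
        using DDw[OF that(1)] that(2-4) unfolding DP_def by blast
      show "C - k \<subseteq> I \<union> last ` WP k" if "k \<in> Os" "C \<in> DD k" for k C
        using DDw[OF that(1)] that(2) unfolding DP_def by blast
    qed
    then have "\<exists>Cf ef Qf. (\<forall>s\<in>JN. Cf s \<in> DD (fst (h s)) \<and> Qf s \<subseteq> WP (fst (h s)) \<and> finite (Qf s)
            \<and> Cf s - (fst (h s)) \<subseteq> I \<union> last ` Qf s \<and> ef s \<in> JN - JM \<and> ef s \<notin> \<Union>(set ` Qf s)) \<and>
         (\<forall>s\<in>JN. \<forall>t\<in>JN. s \<noteq> t \<longrightarrow> Cf s \<noteq> Cf t \<and>
            insert (ef s) (\<Union>(set ` Qf s)) \<inter> insert (ef t) (\<Union>(set ` Qf t)) = {})"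
      by (simp only: Field_card_of)
    then obtain Cf ef Qf where
      C1a: "\<forall>s\<in>JN. Cf s \<in> DD (fst (h s)) \<and> Qf s \<subseteq> WP (fst (h s)) \<and> finite (Qf s)
            \<and> Cf s - (fst (h s)) \<subseteq> I \<union> last ` Qf s \<and> ef s \<in> JN - JM \<and> ef s \<notin> \<Union>(set ` Qf s)"
      and C2a: "\<forall>s\<in>JN. \<forall>t\<in>JN. s \<noteq> t \<longrightarrow> Cf s \<noteq> Cf t \<and>
            insert (ef s) (\<Union>(set ` Qf s)) \<inter> insert (ef t) (\<Union>(set ` Qf t)) = {}"
      by (elim exE conjE)
    have C1: "Cf s \<in> DD (fst (h s)) \<and> Qf s \<subseteq> WP (fst (h s)) \<and> finite (Qf s)
            \<and> Cf s - (fst (h s)) \<subseteq> I \<union> last ` Qf s \<and> ef s \<in> JN - JM \<and> ef s \<notin> \<Union>(set ` Qf s)"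
      if "s \<in> JN" for s using bspec[OF C1a that] .
    have C2: "Cf s \<noteq> Cf t \<and>
            insert (ef s) (\<Union>(set ` Qf s)) \<inter> insert (ef t) (\<Union>(set ` Qf t)) = {}"
      if "s \<in> JN" "t \<in> JN" "s \<noteq> t" for s t using C2a that by blast
    have hOs: "fst (h s) \<in> Os" if "s \<in> JN" for s
    proof -
      have "h s \<in> Os \<times> JN" using h that by blast
      then show ?thesis by auto
    qed
    define S where "S = (\<lambda>s. insert [ef s] (Qf s))"
    define P where "P = (\<Union>s\<in>JN. S s)"
    have setS: "set p \<subseteq> insert (ef s) (\<Union>(set ` Qf s))" if "p \<in> S s" for p s
      using that unfolding S_def by auto
    have bp: "\<forall>p\<in>P. b_path E indM indN (I \<union> JM) (I \<union> JN) p"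
    proof
      fix p assume "p \<in> P"
      then obtain s where s: "s \<in> JN" "p \<in> S s" unfolding P_def by blast
      show "b_path E indM indN (I \<union> JM) (I \<union> JN) p"
      proof (cases "p = [ef s]")
        case True then show ?thesis using sb C1[OF s(1)] by simp
      next
        case False
        then have "p \<in> WP (fst (h s))" using s(2) C1[OF s(1)] unfolding S_def by blast
        then show ?thesis using PSw[OF hOs[OF s(1)]] unfolding path_system_def by blast
      qed
    qed
    have dj: "\<forall>p\<in>P. \<forall>q\<in>P. p \<noteq> q \<longrightarrow> set p \<inter> set q = {}"
    proof (intro ballI impI)
      fix p q assume "p \<in> P" "q \<in> P" "p \<noteq> q"
      then obtain s t where st: "s \<in> JN" "p \<in> S s" "t \<in> JN" "q \<in> S t" unfolding P_def by blast
      show "set p \<inter> set q = {}"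
      proof (cases "s = t")
        case False
        then show ?thesis using C2[OF st(1,3) False] setS[OF st(2)] setS[OF st(4)] by blast
      next
        case True
        have c: "Qf s \<subseteq> WP (fst (h s))" "ef s \<notin> \<Union>(set ` Qf s)" using C1[OF st(1)] by auto
        have ds: "set p' \<inter> set q' = {}" if "p' \<in> Qf s" "q' \<in> Qf s" "p' \<noteq> q'" for p' q'
          using PSw[OF hOs[OF st(1)]] c(1) that unfolding path_system_def by blast
        show ?thesis
          using st(2,4) True \<open>p \<noteq> q\<close> c(2) ds unfolding S_def by auto
      qed
    qed
    have fS: "finite (S s)" if "s \<in> JN" for s using C1[OF that] unfolding S_def by simp
    have cle: "(card_of P, card_of JN) \<in> ordLeq"
      unfolding P_def
    proof (rule card_of_UNION_ordLeq_infinite[OF infJN])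
      show "(card_of JN, card_of JN) \<in> ordLeq" by (rule ordIso_imp_ordLeq[OF card_of_refl])
      show "\<forall>s\<in>JN. (card_of (S s), card_of JN) \<in> ordLeq"
        using fS finite_less_inf[OF _ infJN] ordLess_imp_ordLeq by blast
    qed
    have efi: "inj_on ef JN"
    proof (rule inj_onI)
      fix s t assume "s \<in> JN" "t \<in> JN" "ef s = ef t"
      then show "s = t" using C2 by blast
    qed
    have cge: "(card_of JN, card_of P) \<in> ordLeq"
    proof (rule card_of_ordLeqI[of "\<lambda>s. [ef s]"])
      show "inj_on (\<lambda>s. [ef s]) JN" using efi unfolding inj_on_def by simp
      show "[ef s] \<in> P" if "s \<in> JN" for s using that unfolding P_def S_def by blast
    qed
    have PS: "path_system E indM indN (I \<union> JM) (I \<union> JN) (card_of JN) P"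
      unfolding path_system_def ordIso_iff_ordLeq using bp dj cle cge by blast
    have W: "witnesses_popular E indM indN I (I \<union> JM) (I \<union> JN) (card_of JN) P K" if K: "K \<in> Os" for K
    proof -
      define A where "A = {s\<in>JN. fst (h s) = K}"
      define D where "D = Cf ` A"
      have circ: "\<forall>C\<in>D. circuit E indM C"
        using C1 DDw[OF K] unfolding D_def A_def DP_def by auto
      have injA: "inj_on Cf A" unfolding A_def inj_on_def using C2 by blast
      define g where "g = (\<lambda>j. SOME s. s \<in> JN \<and> h s = (K, j))"
      have g: "g j \<in> JN \<and> h (g j) = (K, j)" if "j \<in> JN" for j
      proof -
        have "(K, j) \<in> h ` JN" using h K that by blast
        then have "\<exists>s. s \<in> JN \<and> h s = (K, j)" by (metis imageE)
        then show ?thesis unfolding g_def by (rule someI_ex)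
      qed
      have a1: "(card_of JN, card_of A) \<in> ordLeq"
      proof (rule card_of_ordLeqI[of g])
        show "inj_on g JN"
        proof (rule inj_onI)
          fix i j assume "i \<in> JN" "j \<in> JN" "g i = g j"
          then show "i = j" using g by (metis prod.inject)
        qed
        show "g j \<in> A" if "j \<in> JN" for j using g[OF that] unfolding A_def by simp
      qed
      have a2: "(card_of A, card_of D) \<in> ordLeq"
        by (rule card_of_ordLeqI[of Cf]) (auto simp: injA D_def)
      have a3: "(card_of D, card_of A) \<in> ordLeq" unfolding D_def by (rule card_of_image)
      have a4: "(card_of A, card_of JN) \<in> ordLeq" by (rule card_of_mono1) (auto simp: A_def)
      have card: "(card_of D, card_of JN) \<in> ordIso"
        unfolding ordIso_iff_ordLeq using ordLeq_transitive[OF a3 a4] ordLeq_transitive[OF a1 a2] by blast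
      have int: "\<forall>C\<in>D. \<forall>C'\<in>D. C \<noteq> C' \<longrightarrow> C \<inter> C' = K"
      proof (intro ballI impI)
        fix C C' assume "C \<in> D" "C' \<in> D" "C \<noteq> C'"
        moreover have "D \<subseteq> DD K"
        proof
          fix C assume "C \<in> D"
          then obtain s where s: "s \<in> JN" "fst (h s) = K" "C = Cf s" unfolding D_def A_def by blast
          have "Cf s \<in> DD (fst (h s))" using C1[OF s(1)] by blast
          then show "C \<in> DD K" using s(2,3) by simp
        qed
        moreover have "\<forall>C\<in>DD K. \<forall>C'\<in>DD K. C \<noteq> C' \<longrightarrow> C \<inter> C' = K"
          using DDw[OF K] unfolding DP_def by blast
        ultimately show "C \<inter> C' = K" by blast
      qed
      have pet: "\<forall>C\<in>D. C - K \<subseteq> I \<union> last ` P"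
      proof
        fix C assume "C \<in> D"
        then obtain s where s: "s \<in> JN" "fst (h s) = K" "C = Cf s" unfolding D_def A_def by blast
        have "Qf s \<subseteq> P" unfolding P_def S_def using s(1) by blast
        moreover have "Cf s - fst (h s) \<subseteq> I \<union> last ` Qf s" using C1[OF s(1)] by blast
        ultimately show "C - K \<subseteq> I \<union> last ` P" using s(2,3) by blast
      qed
      show ?thesis unfolding witnesses_popular_def
        apply (rule conjI[OF PS])
        apply (rule exI[of _ D])
        using circ card int pet by blast
    qed
    show ?thesis using PS W by blast
  qed
qed


end
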